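(* Let bidder $i$ have a constraint-homogeneous valuation with interest set $S$ and per-unit value $\hat v$, let $s^*=\lceil |S|/2\rceil$, and let $b_i'$ be the Core Deviation of $i$. For every strategy profile $b$, if bidder $i$ wins at least $s^*$ items of $S$ in the profile $(b_i'(b_i),b_{-i})$, then $u_i(b_i'(b_i),b_{-i};v_i)\ge \tfrac12 s^*\hat v-P_i(b)$.
   Context: Draft auction: $n$ bidders, items $[m]$; rounds are run while the set $I$ of remaining items is nonempty: each bidder submits a sealed bid $b_i\ge0$ and a set $X_i\subseteq I$; the highest bidder (ties arbitrary) gets her set (removed from $I$) and pays her bid times its size; winner, winning bid and bundle are announced. A strategy maps observed histories to actions. $u_i(b;v_i)$ is quasi-linear utility, $P_i(b)$ total payment of $i$ under $b$. Constraint-homogeneous valuation: $v(T)=\hat v|T\cap S|$. Items of $S$ are called units. For the original strategy $b_i$ (within profile $b$), $b_{it}$ denotes $i$'s bid in auction (round) $t$, $k_{it}$ the number of units she obtains in auction $t$ and $k_{i,<t}$ the number obtained before auction $t$. Core Deviation $b_i'$: let $b_i^*=\hat v/2$. In every auction $t$ she bids $\max\{b_i^*,b_{it}\}$. If she wins with bid $b_i^*$ (i.e. $b_i^*>b_{it}$), she takes $s^*-k_{i,<t}$ units of $S$ and drops out. If she wins with bid $b_{it}$, she takes exactly what she took under $b_i$ in auction $t$ (the $k_{it}$ units and any other items). She keeps bidding this way until she has acquired $s^*$ units or the remaining units are not enough to complete $s^*$ units. *)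

theory Defs
  imports Complex_Main
begin

text \<open>Bidders are 0..n-1, items are 0..m-1.
  A public history is the list of announcements (winner, winning bid, bundle),
  in chronological order. A strategy maps observed histories to actions (bid, set).\<close>

type_synonym hist = "(nat \<times> real \<times> nat set) list"
type_synonym strat = "hist \<Rightarrow> real \<times> nat set"

definition remaining :: "nat \<Rightarrow> hist \<Rightarrow> nat set" where
  "remaining m h = {..<m} - (\<Union>e\<in>set h. snd (snd e))"

definition won_in :: "nat \<Rightarrow> hist \<Rightarrow> nat set" where
  "won_in i h = (\<Union>e\<in>{e\<in>set h. fst e = i}. snd (snd e))"

definition valid_strategy :: "nat \<Rightarrow> strat \<Rightarrow> bool" where
  "valid_strategy m s = (\<forall>h. 0 \<le> fst (s h) \<and> snd (s h) \<subseteq> remaining m h)"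

text \<open>One round at history h: the highest bidder wins; ties are broken by a
  (history-dependent) priority order prio h (lower value = higher priority).\<close>
definition round_outcome ::
  "nat \<Rightarrow> (hist \<Rightarrow> nat \<Rightarrow> nat) \<Rightarrow> (nat \<Rightarrow> strat) \<Rightarrow> hist \<Rightarrow> nat \<times> real \<times> nat set" where
  "round_outcome n prio b h =
     (let top = Max ((\<lambda>j. fst (b j h)) ` {..<n});
          w = (ARG_MIN (prio h) j. j < n \<and> fst (b j h) = top)
      in (w, fst (b w h), snd (b w h)))"

primrec play ::
  "nat \<Rightarrow> nat \<Rightarrow> (hist \<Rightarrow> nat \<Rightarrow> nat) \<Rightarrow> (nat \<Rightarrow> strat) \<Rightarrow> nat \<Rightarrow> hist" where
  "play n m prio b 0 = []"
| "play n m prio b (Suc t) =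
     (let h = play n m prio b t in
      if remaining m h = {} then h else h @ [round_outcome n prio b h])"

definition round_run :: "nat \<Rightarrow> nat \<Rightarrow> (hist \<Rightarrow> nat \<Rightarrow> nat) \<Rightarrow> (nat \<Rightarrow> strat) \<Rightarrow> nat \<Rightarrow> bool" where
  "round_run n m prio b t = (remaining m (play n m prio b t) \<noteq> {})"

definition outcome ::
  "nat \<Rightarrow> nat \<Rightarrow> (hist \<Rightarrow> nat \<Rightarrow> nat) \<Rightarrow> (nat \<Rightarrow> strat) \<Rightarrow> nat \<Rightarrow> nat \<times> real \<times> nat set" where
  "outcome n m prio b t = round_outcome n prio b (play n m prio b t)"

definition items_won :: "nat \<Rightarrow> nat \<Rightarrow> (hist \<Rightarrow> nat \<Rightarrow> nat) \<Rightarrow> (nat \<Rightarrow> strat) \<Rightarrow> nat \<Rightarrow> nat set" where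
  "items_won n m prio b i =
     (\<Union>t\<in>{t. round_run n m prio b t \<and> fst (outcome n m prio b t) = i}. snd (snd (outcome n m prio b t)))"

text \<open>total payment P_i(b): winning bid times bundle size, summed over the rounds i wins
  (rounds with an empty bundle cost nothing and are omitted, so the index set is finite)\<close>
definition payment :: "nat \<Rightarrow> nat \<Rightarrow> (hist \<Rightarrow> nat \<Rightarrow> nat) \<Rightarrow> (nat \<Rightarrow> strat) \<Rightarrow> nat \<Rightarrow> real" where
  "payment n m prio b i =
     (\<Sum>t\<in>{t. round_run n m prio b t \<and> fst (outcome n m prio b t) = i
              \<and> snd (snd (outcome n m prio b t)) \<noteq> {}}.
        fst (snd (outcome n m prio b t)) * real (card (snd (snd (outcome n m prio b t)))))"

definition ch_val :: "real \<Rightarrow> nat set \<Rightarrow> nat set \<Rightarrow> real" where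
  "ch_val vhat S T = vhat * real (card (T \<inter> S))"

definition utility ::
  "nat \<Rightarrow> nat \<Rightarrow> (hist \<Rightarrow> nat \<Rightarrow> nat) \<Rightarrow> (nat \<Rightarrow> strat) \<Rightarrow> nat \<Rightarrow> (nat set \<Rightarrow> real) \<Rightarrow> real" where
  "utility n m prio b i v = v (items_won n m prio b i) - payment n m prio b i"

definition sstar :: "nat set \<Rightarrow> nat" where
  "sstar S = nat \<lceil>real (card S) / 2\<rceil>"

text \<open>Core Deviation of bidder i built from her original strategy bi.
  pick A k is the (arbitrary) choice of k units out of the remaining units A.
  k = units obtained so far, r = units still available.\<close>
definition core_deviation ::
  "nat \<Rightarrow> nat set \<Rightarrow> real \<Rightarrow> (nat set \<Rightarrow> nat \<Rightarrow> nat set) \<Rightarrow> nat \<Rightarrow> strat \<Rightarrow> strat" where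
  "core_deviation m S vhat pick i bi h =
     (let bst = vhat / 2; s = sstar S;
          k = card (won_in i h \<inter> S); r = card (S \<inter> remaining m h)
      in if k < s \<and> s \<le> k + r
         then (if bst > fst (bi h) then (bst, pick (S \<inter> remaining m h) (s - k)) else bi h)
         else (0, {}))"

end

theory Submission
  imports Defs
begin

lemma play_run: "round_run n m prio b t \<Longrightarrow>
   play n m prio b (Suc t) = play n m prio b t @ [outcome n m prio b t]"
  by (simp add: round_run_def outcome_def Let_def)

lemma play_notrun: "\<not> round_run n m prio b t \<Longrightarrow> play n m prio b (Suc t) = play n m prio b t"
  by (simp add: round_run_def Let_def)

lemma set_play_mono: "t \<le> t' \<Longrightarrow> set (play n m prio b t) \<subseteq> set (play n m prio b t')"
proof (induction t')
  case (Suc t')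
  have "set (play n m prio b t') \<subseteq> set (play n m prio b (Suc t'))" by (auto simp: Let_def)
  thus ?case using Suc by (auto simp: le_Suc_eq)
qed simp

lemma remaining_app: "remaining m (h @ [e]) = remaining m h - snd (snd e)"
  by (auto simp: remaining_def)

lemma won_in_app: "won_in i (h @ [e]) = won_in i h \<union> (if fst e = i then snd (snd e) else {})"
  by (auto simp: won_in_def)

lemma won_rem_disj: "won_in i h \<inter> remaining m h = {}"
  by (auto simp: won_in_def remaining_def)

lemma ro_eq: "round_outcome n prio b h =
  (fst (round_outcome n prio b h), fst (b (fst (round_outcome n prio b h)) h),
   snd (b (fst (round_outcome n prio b h)) h))"
  by (simp add: round_outcome_def Let_def)

lemma ro_cong: "(\<And>j. b1 j h = b2 j h) \<Longrightarrow> round_outcome n prio b1 h = round_outcome n prio b2 h"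
  by (simp add: round_outcome_def)

lemma winner_props:
  assumes "0 < n"
  shows "fst (round_outcome n prio b h) < n \<and>
    fst (b (fst (round_outcome n prio b h)) h) = Max ((\<lambda>j. fst (b j h)) ` {..<n}) \<and>
    (\<forall>j. j < n \<and> fst (b j h) = Max ((\<lambda>j. fst (b j h)) ` {..<n}) \<longrightarrow>
        prio h (fst (round_outcome n prio b h)) \<le> prio h j)"
proof -
  let ?top = "Max ((\<lambda>j. fst (b j h)) ` {..<n})"
  let ?P = "\<lambda>j. j < n \<and> fst (b j h) = ?top"
  have "?top \<in> (\<lambda>j. fst (b j h)) ` {..<n}" using assms by (intro Max_in) auto
  then obtain j where "?P j" by auto
  hence "?P (arg_min (prio h) ?P)" "\<forall>y. ?P y \<longrightarrow> prio h (arg_min (prio h) ?P) \<le> prio h y"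
    using arg_min_nat_lemma[of ?P j "prio h"] by auto
  thus ?thesis by (simp add: round_outcome_def Let_def)
qed

lemma arg_min_eqI:
  assumes "inj_on f A" "\<And>x. P x \<Longrightarrow> x \<in> A" "P w" "\<And>x. P x \<Longrightarrow> f w \<le> (f x::nat)"
  shows "arg_min f P = w"
proof -
  have "P (arg_min f P)" "f (arg_min f P) \<le> f w"
    using arg_min_nat_lemma[of P w f] assms(3) by auto
  moreover have "f w \<le> f (arg_min f P)" using assms(4) calculation(1) .
  ultimately show ?thesis using assms(1,2,3) by (meson antisym inj_onD)
qed

lemma tie_lemma:
  assumes n0: "0 < n" and inj: "inj_on (prio h) {..<n}" and i: "i < n"
    and oth: "\<And>j. j \<noteq> i \<Longrightarrow> b' j h = b j h"
    and lt: "fst (b i h) < fst (b' i h)"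
    and w: "fst (round_outcome n prio b' h) \<noteq> i"
  shows "round_outcome n prio b h = round_outcome n prio b' h"
proof -
  let ?w = "fst (round_outcome n prio b' h)"
  let ?top' = "Max ((\<lambda>j. fst (b' j h)) ` {..<n})"
  let ?top = "Max ((\<lambda>j. fst (b j h)) ` {..<n})"
  have W: "?w < n" "fst (b' ?w h) = ?top'"
    "\<And>j. j < n \<Longrightarrow> fst (b' j h) = ?top' \<Longrightarrow> prio h ?w \<le> prio h j"
    using winner_props[OF n0, of prio b' h] by auto
  have ge': "\<And>j. j < n \<Longrightarrow> fst (b' j h) \<le> ?top'" by (intro Max_ge) auto
  have top: "?top = ?top'"
  proof (rule Max_eqI)
    fix y assume "y \<in> (\<lambda>j. fst (b j h)) ` {..<n}"
    then obtain j where j: "j < n" "y = fst (b j h)" by auto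
    show "y \<le> ?top'"
    proof (cases "j = i")
      case True
      have "fst (b i h) \<le> ?top'" using ge'[OF i] lt by linarith
      thus ?thesis using j True by simp
    next
      case False thus ?thesis using j ge'[of j] oth by simp
    qed
  next
    show "?top' \<in> (\<lambda>j. fst (b j h)) ` {..<n}"
      using W oth[OF w] by (metis image_eqI lessThan_iff)
  qed simp
  have am: "(ARG_MIN (prio h) j. j < n \<and> fst (b j h) = ?top) = ?w"
  proof (rule arg_min_eqI[OF inj])
    show "?w < n \<and> fst (b ?w h) = ?top" using W oth[OF w] top by simp
  next
    fix x assume x: "x < n \<and> fst (b x h) = ?top"
    have "x \<noteq> i" using x top lt ge'[OF i] by auto
    thus "prio h ?w \<le> prio h x" using x W(3)[of x] oth top by simp
  qed auto
  show ?thesis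
    using am oth[OF w] ro_eq[of n prio b' h] by (simp add: round_outcome_def Let_def)
qed


lemma bundle_sub:
  assumes "0 < n" "\<forall>j<n. valid_strategy m (b j)"
  shows "snd (snd (round_outcome n prio b h)) \<subseteq> remaining m h \<and> 0 \<le> fst (snd (round_outcome n prio b h))"
proof -
  have "fst (round_outcome n prio b h) < n" using winner_props[OF assms(1)] by blast
  thus ?thesis using assms(2) ro_eq[of n prio b h] unfolding valid_strategy_def
    by (metis fst_conv snd_conv)
qed

lemma finite_rounds:
  assumes n0: "0 < n" and val: "\<forall>j<n. valid_strategy m (b j)"
  shows "finite {t. round_run n m prio b t \<and> snd (snd (outcome n m prio b t)) \<noteq> {}}"
    (is "finite ?D")
proof -
  let ?B = "\<lambda>t. snd (snd (outcome n m prio b t))"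
  define f where "f t = (SOME x. x \<in> ?B t)" for t
  have fin: "f t \<in> ?B t" if "t \<in> ?D" for t
  proof -
    from that obtain x where "x \<in> ?B t" by blast
    thus ?thesis unfolding f_def by (rule someI)
  qed
  have sub: "?B t \<subseteq> remaining m (play n m prio b t)" for t
    using bundle_sub[OF n0 val] by (simp add: outcome_def)
  have disj: "?B t1 \<inter> remaining m (play n m prio b t2) = {}"
    if "t1 < t2" "round_run n m prio b t1" for t1 t2
  proof -
    have "outcome n m prio b t1 \<in> set (play n m prio b (Suc t1))"
      using play_run[OF that(2)] by simp
    also have "\<dots> \<subseteq> set (play n m prio b t2)" using that(1) by (intro set_play_mono) simp
    finally show ?thesis unfolding remaining_def by auto
  qed
  have "inj_on f ?D"
  proof (rule linorder_inj_onI')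
    fix t1 t2 assume "t1 \<in> ?D" "t2 \<in> ?D" "t1 < t2"
    thus "f t1 \<noteq> f t2" using fin[of t1] fin[of t2] sub[of t2] disj[of t1 t2] by auto
  qed
  moreover have "f ` ?D \<subseteq> {..<m}"
  proof
    fix y assume "y \<in> f ` ?D"
    then obtain t where "t \<in> ?D" "y = f t" by blast
    thus "y \<in> {..<m}" using fin[of t] sub[of t] unfolding remaining_def by blast
  qed
  hence "finite (f ` ?D)" using finite_subset by blast
  ultimately show ?thesis using finite_imageD by blast
qed


context
  fixes n m i :: nat and S :: "nat set" and vhat :: real
    and b :: "nat \<Rightarrow> strat" and prio :: "hist \<Rightarrow> nat \<Rightarrow> nat"
    and pick :: "nat set \<Rightarrow> nat \<Rightarrow> nat set"
  assumes i_lt: "i < n"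
    and S_sub: "S \<subseteq> {..<m}"
    and vpos: "0 \<le> vhat"
    and valid: "\<forall>j<n. valid_strategy m (b j)"
    and inj: "\<forall>h. inj_on (prio h) {..<n}"
    and pickA: "\<forall>A k. finite A \<and> k \<le> card A \<longrightarrow> pick A k \<subseteq> A \<and> card (pick A k) = k"
begin

abbreviation "bd \<equiv> b(i := core_deviation m S vhat pick i (b i))"
abbreviation "act h \<equiv> card (won_in i h \<inter> S) < sstar S \<and>
   sstar S \<le> card (won_in i h \<inter> S) + card (S \<inter> remaining m h)"
abbreviation "pk h \<equiv> pick (S \<inter> remaining m h) (sstar S - card (won_in i h \<inter> S))"
abbreviation "H t \<equiv> play n m prio b t"
abbreviation "H' t \<equiv> play n m prio bd t"

declare play.simps[simp del]

lemma n0: "0 < n" using i_lt by simp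

lemma finS: "finite S" using S_sub finite_subset by blast

lemma cd_eq: "bd i h = (if act h then (if vhat/2 > fst (b i h) then (vhat/2, pk h) else b i h) else (0,{}))"
  by (simp add: core_deviation_def Let_def)

lemma cd_dead: "\<not> act h \<Longrightarrow> bd i h = (0,{})"
  by (simp only: cd_eq[of h] if_not_P if_False)

lemma cd_bst: "act h \<Longrightarrow> vhat/2 > fst (b i h) \<Longrightarrow> bd i h = (vhat/2, pk h)"
  by (simp only: cd_eq[of h] if_P)

lemma cd_orig: "act h \<Longrightarrow> \<not> vhat/2 > fst (b i h) \<Longrightarrow> bd i h = b i h"
  by (simp only: cd_eq[of h] if_P if_not_P if_False if_True)

lemma oth: "j \<noteq> i \<Longrightarrow> bd j h = b j h" by simp

lemma pk_props: "act h \<Longrightarrow> pk h \<subseteq> S \<inter> remaining m h \<and> card (pk h) = sstar S - card (won_in i h \<inter> S)"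
proof -
  assume a: "act h"
  have "finite (S \<inter> remaining m h)" using finS by simp
  moreover have "sstar S - card (won_in i h \<inter> S) \<le> card (S \<inter> remaining m h)" using a by linarith
  ultimately show ?thesis using pickA by blast
qed

lemma win_dead:
  assumes "act h"
  shows "\<not> act (h @ [(i, vhat/2, pk h)])"
proof -
  let ?W = "won_in i h \<inter> S"
  have P: "pk h \<subseteq> S \<inter> remaining m h" "card (pk h) = sstar S - card ?W" using pk_props[OF assms] by auto
  have "won_in i (h @ [(i, vhat/2, pk h)]) \<inter> S = ?W \<union> pk h" using P(1) by (auto simp: won_in_app)
  moreover have "?W \<inter> pk h = {}" using P(1) won_rem_disj[of i h m] by blast
  moreover have "finite ?W" "finite (pk h)" using finS P(1) finite_subset by auto
  ultimately have "card (won_in i (h @ [(i, vhat/2, pk h)]) \<inter> S) = card ?W + card (pk h)"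
    by (simp add: card_Un_disjoint)
  thus ?thesis using P(2) assms by simp
qed

lemma dead_step:
  assumes "\<not> act (H' t)"
  shows "\<not> act (H' (Suc t))"
proof (cases "round_run n m prio bd t")
  case False thus ?thesis using assms play_notrun by metis
next
  case True
  let ?h = "H' t" and ?o = "outcome n m prio bd t"
  have eq: "H' (Suc t) = ?h @ [?o]" using play_run[OF True] .
  have o: "?o = (fst ?o, fst (bd (fst ?o) ?h), snd (bd (fst ?o) ?h))"
    unfolding outcome_def using ro_eq by metis
  have "fst ?o = i \<Longrightarrow> snd (snd ?o) = {}" using o cd_eq[of ?h] assms
    by (metis (no_types, lifting) fun_upd_same snd_conv)
  hence W: "won_in i (H' (Suc t)) = won_in i ?h" unfolding eq won_in_app by auto
  have "S \<inter> remaining m (H' (Suc t)) \<subseteq> S \<inter> remaining m ?h" unfolding eq remaining_app by auto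
  hence "card (S \<inter> remaining m (H' (Suc t))) \<le> card (S \<inter> remaining m ?h)"
    using finS by (intro card_mono) auto
  thus ?thesis using assms W by auto
qed

lemma dead_mono:
  assumes "\<not> act (H' t)" "t \<le> t'"
  shows "\<not> act (H' t')"
  using assms(2,1)
proof (induction t' rule: dec_induct)
  case (step k) thus ?case using dead_step by blast
qed simp

lemma inv: "H' t = H t \<or> \<not> act (H' t)"
proof (induction t)
  case 0 show ?case by (simp add: play.simps(1))
next
  case (Suc t)
  show ?case
  proof (cases "act (H' t)")
    case False thus ?thesis using dead_step by blast
  next
    case True
    with Suc have E: "H' t = H t" by blast
    let ?h = "H t"
    show ?thesis
    proof (cases "round_run n m prio b t")
      case False
      hence "\<not> round_run n m prio bd t" using E by (simp add: round_run_def)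
      thus ?thesis using False E play_notrun by metis
    next
      case run: True
      hence run': "round_run n m prio bd t" using E by (simp add: round_run_def)
      have S1: "H (Suc t) = ?h @ [round_outcome n prio b ?h]"
        using play_run[OF run] by (simp add: outcome_def)
      have S2: "H' (Suc t) = ?h @ [round_outcome n prio bd ?h]"
        using play_run[OF run'] E by (simp add: outcome_def)
      show ?thesis
      proof (cases "vhat/2 > fst (b i ?h)")
        case False
        have "\<And>j. bd j ?h = b j ?h" using cd_eq[of ?h] False True E by auto
        hence "round_outcome n prio bd ?h = round_outcome n prio b ?h" by (rule ro_cong)
        thus ?thesis using S1 S2 by metis
      next
        case bst: True
        have bdi: "bd i ?h = (vhat/2, pk ?h)" using cd_eq[of ?h] bst True E by simp
        show ?thesis
        proof (cases "fst (round_outcome n prio bd ?h) = i")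
          case True
          hence "round_outcome n prio bd ?h = (i, vhat/2, pk ?h)"
            using ro_eq[of n prio bd ?h] bdi by (metis fst_conv snd_conv)
          hence "H' (Suc t) = ?h @ [(i, vhat/2, pk ?h)]" using S2 by simp
          moreover have "\<not> act (?h @ [(i, vhat/2, pk ?h)])" using win_dead[of ?h] \<open>act (H' t)\<close> E by simp
          ultimately show ?thesis by metis
        next
          case False
          have "round_outcome n prio b ?h = round_outcome n prio bd ?h"
          proof (rule tie_lemma[OF n0 inj[rule_format] i_lt oth])
            show "fst (b i ?h) < fst (bd i ?h)" using bdi bst by simp
          qed (simp, rule False)
          thus ?thesis using S1 S2 by metis
        qed
      qed
    qed
  qed
qed


lemma inD':
  assumes "round_run n m prio bd t" "fst (outcome n m prio bd t) = i"
    "snd (snd (outcome n m prio bd t)) \<noteq> {}"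
  shows "act (H' t) \<and> H' t = H t"
proof -
  have o: "outcome n m prio bd t = (i, fst (bd i (H' t)), snd (bd i (H' t)))"
  proof -
    have W: "fst (round_outcome n prio bd (H' t)) = i" using assms(2) by (simp add: outcome_def)
    show ?thesis unfolding outcome_def by (subst ro_eq) (simp only: W)
  qed
  have "act (H' t)"
  proof (rule ccontr)
    assume na: "\<not> act (H' t)"
    have "bd i (H' t) = (0,{})" using na by (rule cd_dead)
    then show False using o assms(3) by simp
  qed
  thus ?thesis using inv by blast
qed

lemma outA:
  assumes "act (H' t)" "H' t = H t" "\<not> vhat/2 > fst (b i (H' t))"
  shows "outcome n m prio bd t = outcome n m prio b t \<and>
         (round_run n m prio bd t \<longleftrightarrow> round_run n m prio b t)"
proof -
  have bi: "bd i (H' t) = b i (H' t)" using assms(1,3) by (rule cd_orig)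
  have "\<And>j. bd j (H' t) = b j (H' t)"
  proof -
    fix j show "bd j (H' t) = b j (H' t)" using bi by (cases "j = i") auto
  qed
  hence "round_outcome n prio bd (H' t) = round_outcome n prio b (H' t)" by (rule ro_cong)
  thus ?thesis using assms(2) unfolding outcome_def round_run_def by simp
qed

lemma outB:
  assumes "act (H' t)" "vhat/2 > fst (b i (H' t))" "round_run n m prio bd t"
    "fst (outcome n m prio bd t) = i"
  shows "outcome n m prio bd t = (i, vhat/2, pk (H' t)) \<and> \<not> act (H' (Suc t))"
proof -
  have bi: "bd i (H' t) = (vhat/2, pk (H' t))" using assms(1,2) by (rule cd_bst)
  have o: "outcome n m prio bd t = (i, vhat/2, pk (H' t))"
  proof -
    have W: "fst (round_outcome n prio bd (H' t)) = i" using assms(4) by (simp add: outcome_def)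
    show ?thesis unfolding outcome_def by (subst ro_eq) (simp only: W bi fst_conv snd_conv)
  qed
  have eq: "H' (Suc t) = H' t @ [(i, vhat/2, pk (H' t))]" using play_run[OF assms(3)] o by simp
  have "\<not> act (H' (Suc t))" unfolding eq by (rule win_dead[OF assms(1)])
  thus ?thesis using o by blast
qed

lemma pay_bound:
  "payment n m prio bd i \<le> payment n m prio b i + vhat/2 * real (sstar S)"
proof -
  let ?tm = "\<lambda>c t. fst (snd (outcome n m prio c t)) * real (card (snd (snd (outcome n m prio c t))))"
  define D' where "D' = {t. round_run n m prio bd t \<and> fst (outcome n m prio bd t) = i
              \<and> snd (snd (outcome n m prio bd t)) \<noteq> {}}"
  define Do where "Do = {t. round_run n m prio b t \<and> fst (outcome n m prio b t) = i
              \<and> snd (snd (outcome n m prio b t)) \<noteq> {}}"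
  define B where "B = {t \<in> D'. vhat/2 > fst (b i (H' t))}"
  define A where "A = D' - B"
  have finDo: "finite Do"
    by (rule finite_subset[OF _ finite_rounds[OF n0 valid, of prio]]) (auto simp: Do_def)
  have Aprops: "t \<in> Do \<and> ?tm bd t = ?tm b t" if "t \<in> A" for t
  proof -
    have t: "t \<in> D'" "\<not> vhat/2 > fst (b i (H' t))" using that by (auto simp: A_def B_def)
    have "act (H' t) \<and> H' t = H t" using t(1) inD' unfolding D'_def by blast
    hence "outcome n m prio bd t = outcome n m prio b t \<and>
         (round_run n m prio bd t \<longleftrightarrow> round_run n m prio b t)" using outA t(2) by blast
    thus ?thesis using t(1) unfolding D'_def Do_def by simp
  qed
  have AsubD: "A \<subseteq> Do" using Aprops by blast
  have finA: "finite A" using AsubD finDo finite_subset by blast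
  have Bsing: "t1 = t2" if "t1 \<in> B" "t2 \<in> B" for t1 t2
  proof (rule ccontr)
    assume ne: "t1 \<noteq> t2"
    have key: False if "u1 \<in> B" "u2 \<in> B" "u1 < u2" for u1 u2
    proof -
      have u1: "round_run n m prio bd u1" "fst (outcome n m prio bd u1) = i"
        "vhat/2 > fst (b i (H' u1))" "act (H' u1)"
        using that(1) inD'[of u1] by (auto simp: B_def D'_def)
      have "\<not> act (H' (Suc u1))" using outB[OF u1(4,3,1,2)] by blast
      moreover have "Suc u1 \<le> u2" using that(3) by simp
      ultimately have "\<not> act (H' u2)" by (rule dead_mono)
      moreover have "act (H' u2)" using that(2) inD'[of u2] by (auto simp: B_def D'_def)
      ultimately show False by blast
    qed
    show False
    proof (cases "t1 < t2")
      case True thus False using key that by blast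
    next
      case False hence "t2 < t1" using ne by simp
      thus False using key that by blast
    qed
  qed
  have finB: "finite B"
  proof (cases "B = {}")
    case False then obtain t0 where "t0 \<in> B" by blast
    hence "B = {t0}" using Bsing by blast
    thus ?thesis by simp
  qed simp
  have sumB: "sum (?tm bd) B \<le> vhat/2 * real (sstar S)"
  proof (cases "B = {}")
    case True thus ?thesis using vpos by simp
  next
    case False then obtain t0 where t0: "t0 \<in> B" by blast
    hence "B = {t0}" using Bsing by blast
    moreover have u: "round_run n m prio bd t0" "fst (outcome n m prio bd t0) = i"
        "vhat/2 > fst (b i (H' t0))" "act (H' t0)"
        using t0 inD'[of t0] by (auto simp: B_def D'_def)
    have o: "outcome n m prio bd t0 = (i, vhat/2, pk (H' t0))" using outB[OF u(4,3,1,2)] by blast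
    have "card (pk (H' t0)) \<le> sstar S" using pk_props[OF u(4)] by simp
    hence "vhat/2 * real (card (pk (H' t0))) \<le> vhat/2 * real (sstar S)"
      using vpos by (intro mult_left_mono) auto
    ultimately show ?thesis using o by simp
  qed
  have D'eq: "D' = A \<union> B" "A \<inter> B = {}" using A_def B_def by auto
  have e1: "payment n m prio bd i = sum (?tm bd) D'" unfolding payment_def D'_def by simp
  have e2: "sum (?tm bd) D' = sum (?tm bd) A + sum (?tm bd) B"
    using D'eq finA finB by (simp add: sum.union_disjoint)
  have e3: "sum (?tm bd) A = sum (?tm b) A" using Aprops by (intro sum.cong) auto
  have e4: "sum (?tm b) A \<le> sum (?tm b) Do"
  proof (rule sum_mono2[OF finDo AsubD])
    fix t assume "t \<in> Do - A"
    have "0 \<le> fst (snd (outcome n m prio b t))"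
      using bundle_sub[OF n0 valid] unfolding outcome_def by blast
    thus "0 \<le> ?tm b t" by simp
  qed
  have e5: "sum (?tm b) Do = payment n m prio b i" unfolding payment_def Do_def by simp
  show ?thesis using e1 e2 e3 e4 e5 sumB by linarith
qed

end

theorem mainTheorem7:
  fixes n m i :: nat and S :: "nat set" and vhat :: real
    and b :: "nat \<Rightarrow> strat" and prio :: "hist \<Rightarrow> nat \<Rightarrow> nat"
    and pick :: "nat set \<Rightarrow> nat \<Rightarrow> nat set"
  assumes "i < n"
    and "S \<subseteq> {..<m}"
    and "0 \<le> vhat"
    and "\<forall>j<n. valid_strategy m (b j)"
    and "\<forall>h. inj_on (prio h) {..<n}"
    and "\<forall>A k. finite A \<and> k \<le> card A \<longrightarrow> pick A k \<subseteq> A \<and> card (pick A k) = k"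
    and "sstar S \<le> card (items_won n m prio (b(i := core_deviation m S vhat pick i (b i))) i \<inter> S)"
  shows "utility n m prio (b(i := core_deviation m S vhat pick i (b i))) i (ch_val vhat S)
           \<ge> 1/2 * real (sstar S) * vhat - payment n m prio b i"
proof -
  let ?bd = "b(i := core_deviation m S vhat pick i (b i))"
  have P: "payment n m prio ?bd i \<le> payment n m prio b i + vhat/2 * real (sstar S)"
    by (rule pay_bound[OF assms(1-6)])
  have "vhat * real (sstar S) \<le> vhat * real (card (items_won n m prio ?bd i \<inter> S))"
    using assms(3,7) by (intro mult_left_mono) auto
  thus ?thesis using P unfolding utility_def ch_val_def by (simp add: field_simps)
qed

end
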